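(* Let $a,b,c,y,\alpha$ be real numbers with $0<c<y<1$ and $y<b<a$. Then \[ \int_{c}^{y}\frac{1-\alpha u}{1-u^2}\,\frac{u\,\mathrm{d}u}{\sqrt{(a-u)(b-u)(u-c)}} =\frac{\sqrt{y-c}}{(1-c^2)\sqrt{(a-c)(b-c)}}\left(2c(1-c\alpha)\,X+\frac23(1-2c\alpha)(y-c)\,Y-\frac25\,\alpha\,(y-c)^2\,Z\right), \] where, writing $\mathbf{x}=\left(\frac{y-c}{1-c},\,-\frac{y-c}{1+c},\,-\frac{y-c}{c-a},\,-\frac{y-c}{c-b}\right)$, \[ X=\mathrm{F}_{D}^{(4)}\left(\tfrac12;1,1,\tfrac12,\tfrac12;\tfrac32;\mathbf{x}\right),\quad Y=\mathrm{F}_{D}^{(4)}\left(\tfrac32;1,1,\tfrac12,\tfrac12;\tfrac52;\mathbf{x}\right),\quad Z=\mathrm{F}_{D}^{(4)}\left(\tfrac52;1,1,\tfrac12,\tfrac12;\tfrac72;\mathbf{x}\right). \]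
   Context: For $n\ge1$, the Lauricella hypergeometric function of $n$ variables is \[ \mathrm{F}_{D}^{(n)}(a;b_1,\dots,b_n;c;x_1,\dots,x_n)=\sum_{m_1,\dots,m_n\ge0}\frac{(a)_{m_1+\cdots+m_n}(b_1)_{m_1}\cdots(b_n)_{m_n}}{(c)_{m_1+\cdots+m_n}\,m_1!\cdots m_n!}\,x_1^{m_1}\cdots x_n^{m_n},\qquad |x_i|<1, \] where $(\lambda)_m=\Gamma(\lambda+m)/\Gamma(\lambda)$ is the Pochhammer symbol; for $\operatorname{Re}c>\operatorname{Re}a>0$ it equals $\frac{\Gamma(c)}{\Gamma(a)\Gamma(c-a)}\int_0^1 u^{a-1}(1-u)^{c-a-1}\prod_{i=1}^n(1-x_iu)^{-b_i}\,\mathrm{d}u$, which gives its analytic continuation to $x_i\notin[1,\infty)$. *)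

theory Defs
  imports "HOL-Analysis.Analysis"
begin

text \<open>Lauricella hypergeometric function F_D^(n), n = length xs = length bs,
  given by its defining multiple power series (valid for |x_i| < 1).\<close>

definition lauricella_FD :: "real \<Rightarrow> real list \<Rightarrow> real \<Rightarrow> real list \<Rightarrow> real" where
  "lauricella_FD a bs c xs =
     infsum (\<lambda>m. pochhammer a (\<Sum>i<length xs. m i) / pochhammer c (\<Sum>i<length xs. m i)
                 * (\<Prod>i<length xs. pochhammer (bs ! i) (m i) * (xs ! i) ^ (m i) / fact (m i)))
            (Pi\<^sub>E {..<length xs} (\<lambda>_. UNIV))"

end

theory Submission
  imports Defs
begin

lemma binom_series:
  fixes b z :: real
  assumes "\<bar>z\<bar> < 1"
  shows "(\<lambda>n. pochhammer b n * z ^ n / fact n) sums ((1 - z) powr (-b))"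
proof -
  have "(\<lambda>n. ((-b) gchoose n) * (-z)^n) sums (1 + (-z)) powr (-b)"
    by (rule gen_binomial_real) (use assms in simp)
  moreover have "((-b) gchoose n) * (-z)^n = pochhammer b n * z ^ n / fact n" for n
  proof -
    have "((-b) gchoose n) = (-1)^n * pochhammer b n / fact n"
      by (simp add: gbinomial_pochhammer)
    moreover have "(-z)^n = (-1)^n * z^n" by (rule power_minus)
    ultimately have "((-b) gchoose n) * (-z)^n = ((-1)^n * (-1)^n) * (pochhammer b n * z ^ n / fact n)"
      by simp
    also have "(-1::real)^n * (-1)^n = 1" by (simp flip: power_mult_distrib)
    finally show ?thesis by simp
  qed
  ultimately show ?thesis by simp
qed

lemma binom_has_sum:
  fixes b z :: real
  assumes "\<bar>z\<bar> < 1" "b > 0"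
  shows "((\<lambda>n. pochhammer b n * z ^ n / fact n) has_sum ((1 - z) powr (-b))) UNIV"
    and "(\<lambda>n. norm (pochhammer b n * z ^ n / fact n)) summable_on UNIV"
proof -
  have pos: "pochhammer b n > 0" for n using assms(2) by (simp add: pochhammer_pos)
  have s1: "(\<lambda>n. pochhammer b n * \<bar>z\<bar> ^ n / fact n) sums ((1 - \<bar>z\<bar>) powr (-b))"
    by (rule binom_series) (use assms in simp)
  have eq: "norm (pochhammer b n * z ^ n / fact n) = pochhammer b n * \<bar>z\<bar> ^ n / fact n" for n
    using pos[of n] by (simp add: abs_mult power_abs)
  have sn: "summable (\<lambda>n. norm (pochhammer b n * z ^ n / fact n))"
    unfolding eq using s1 by (simp add: sums_iff)
  show "((\<lambda>n. pochhammer b n * z ^ n / fact n) has_sum ((1 - z) powr (-b))) UNIV"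
    by (rule norm_summable_imp_has_sum[OF sn binom_series[OF assms(1)]])
  show "(\<lambda>n. norm (pochhammer b n * z ^ n / fact n)) summable_on UNIV"
    using norm_summable_imp_summable_on[of "\<lambda>n. norm (pochhammer b n * z ^ n / fact n)"] sn by simp
qed

definition Tm :: "real list \<Rightarrow> real list \<Rightarrow> (nat \<Rightarrow> nat) \<Rightarrow> real" where
  "Tm bs xs m = (\<Prod>i<length xs. pochhammer (bs!i) (m i) * (xs!i)^(m i) / fact (m i))"

definition Gf :: "real list \<Rightarrow> real list \<Rightarrow> real" where
  "Gf bs xs = (\<Prod>i<length xs. (1 - xs!i) powr (-(bs!i)))"

lemma prod_series:
  assumes "\<And>i. i < length xs \<Longrightarrow> bs!i > 0 \<and> \<bar>xs!i\<bar> < 1"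
  shows "(Tm bs xs has_sum Gf bs xs) (PiE {..<length xs} (\<lambda>_. UNIV))"
    and "(\<lambda>m. norm (Tm bs xs m)) summable_on (PiE {..<length xs} (\<lambda>_. UNIV))"
proof -
  define f where "f = (\<lambda>i n. pochhammer (bs!i) n * (xs!i)^n / fact n)"
  define fa where "fa = (\<lambda>i n. norm (f i n))"
  let ?A = "{..<length xs}"
  let ?P = "PiE ?A (\<lambda>_. UNIV::nat set)"
  have absf: "(\<lambda>n. norm (f i n)) summable_on UNIV" if "i \<in> ?A" for i
    unfolding f_def using binom_has_sum(2)[of "xs!i" "bs!i"] assms[of i] that by auto
  have inff: "infsum (f i) UNIV = (1 - xs!i) powr (-(bs!i))" if "i \<in> ?A" for i
    unfolding f_def using binom_has_sum(1)[of "xs!i" "bs!i"] assms[of i] that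
    by (auto intro: infsumI)
  have absfa: "(\<lambda>n. norm (fa i n)) summable_on UNIV" if "i \<in> ?A" for i
    unfolding fa_def using absf[OF that] by simp
  have fa_eq: "fa i n = pochhammer (bs!i) n * \<bar>xs!i\<bar>^n / fact n" if "i \<in> ?A" for i n
  proof -
    have "pochhammer (bs!i) n > 0" using assms[of i] that by (simp add: pochhammer_pos)
    then show ?thesis unfolding fa_def f_def by (simp add: abs_mult power_abs)
  qed
  have inffa: "infsum (fa i) UNIV = (1 - \<bar>xs!i\<bar>) powr (-(bs!i))" if "i \<in> ?A" for i
  proof -
    have "infsum (fa i) UNIV = infsum (\<lambda>n. pochhammer (bs!i) n * \<bar>xs!i\<bar>^n / fact n) UNIV"
      by (rule infsum_cong) (use fa_eq[OF that] in simp)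
    also have "\<dots> = (1 - \<bar>xs!i\<bar>) powr (-(bs!i))"
      using binom_has_sum(1)[of "\<bar>xs!i\<bar>" "bs!i"] assms[of i] that by (auto intro: infsumI)
    finally show ?thesis .
  qed
  have I1: "infsum (\<lambda>g. \<Prod>i\<in>?A. f i (g i)) ?P = (\<Prod>i\<in>?A. infsum (f i) UNIV)"
    by (rule infsum_prod_PiE_abs) (use absf in auto)
  have I2: "infsum (\<lambda>g. \<Prod>i\<in>?A. fa i (g i)) ?P = (\<Prod>i\<in>?A. infsum (fa i) UNIV)"
    by (rule infsum_prod_PiE_abs) (use absfa in auto)
  also have "\<dots> = (\<Prod>i\<in>?A. (1 - \<bar>xs!i\<bar>) powr (-(bs!i)))"
    using inffa by (rule prod.cong[OF refl])
  also have "\<dots> > 0"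
    by (rule prod_pos) (use assms in fastforce)
  finally have "infsum (\<lambda>g. \<Prod>i\<in>?A. fa i (g i)) ?P \<noteq> 0" by simp
  hence S: "(\<lambda>g. \<Prod>i\<in>?A. fa i (g i)) summable_on ?P"
    using infsum_not_exists by blast
  have normeq: "(\<Prod>i\<in>?A. fa i (g i)) = norm (Tm bs xs g)" for g
    unfolding fa_def Tm_def f_def by (simp only: real_norm_def abs_prod)
  show S2: "(\<lambda>m. norm (Tm bs xs m)) summable_on ?P"
    using S unfolding normeq .
  have "Tm bs xs summable_on ?P"
    using S2 summable_on_iff_abs_summable_on_real by blast
  moreover have "infsum (Tm bs xs) ?P = Gf bs xs"
  proof -
    have "infsum (Tm bs xs) ?P = infsum (\<lambda>g. \<Prod>i\<in>?A. f i (g i)) ?P"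
      unfolding Tm_def f_def by simp
    also have "\<dots> = Gf bs xs" unfolding I1 Gf_def using inff by (rule prod.cong[OF refl])
    finally show ?thesis .
  qed
  ultimately show "(Tm bs xs has_sum Gf bs xs) ?P"
    using has_sum_infsum by fastforce
qed

lemma group_deg:
  fixes g :: "'a \<Rightarrow> real" and deg :: "'a \<Rightarrow> nat"
  assumes "g summable_on A" "\<And>n. finite {m\<in>A. deg m = n}"
  shows "(\<lambda>n. \<Sum>m\<in>{m\<in>A. deg m = n}. g m) sums infsum g A"
proof -
  define B where "B = (\<lambda>n. {m\<in>A. deg m = n})"
  have bij: "bij_betw (\<lambda>m. (deg m, m)) A (Sigma UNIV B)"
    unfolding B_def by (rule bij_betwI[where g=snd]) auto
  have S: "(\<lambda>(n,m). g m) summable_on (Sigma UNIV B)"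
    using summable_on_reindex_bij_betw[OF bij, of "\<lambda>(n,m). g m"] assms(1) by simp
  have I: "infsum (\<lambda>(n,m). g m) (Sigma UNIV B) = infsum g A"
    using infsum_reindex_bij_betw[OF bij, of "\<lambda>(n,m). g m"] by simp
  have S2: "(\<lambda>n. infsum (\<lambda>m. g m) (B n)) summable_on UNIV"
    using summable_on_Sigma_banach[of "\<lambda>n m. g m" UNIV B] S by simp
  have I2: "infsum (\<lambda>n. infsum (\<lambda>m. g m) (B n)) UNIV = infsum g A"
    using infsum_Sigma'_banach[of "\<lambda>n m. g m" UNIV B] S I by simp
  have fin: "infsum (\<lambda>m. g m) (B n) = (\<Sum>m\<in>B n. g m)" for n
    using assms(2) unfolding B_def by simp
  have "((\<lambda>n. \<Sum>m\<in>B n. g m) has_sum infsum g A) UNIV"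
    using has_sum_infsum[OF S2] I2 unfolding fin by simp
  then show ?thesis unfolding B_def by (rule has_sum_imp_sums)
qed

definition PP :: "real list \<Rightarrow> (nat \<Rightarrow> nat) set" where
  "PP xs = PiE {..<length xs} (\<lambda>_. UNIV)"

definition dg :: "real list \<Rightarrow> (nat \<Rightarrow> nat) \<Rightarrow> nat" where
  "dg xs m = (\<Sum>i<length xs. m i)"

definition dd :: "real list \<Rightarrow> real list \<Rightarrow> nat \<Rightarrow> real" where
  "dd bs xs n = (\<Sum>m\<in>{m\<in>PP xs. dg xs m = n}. Tm bs xs m)"

lemma fin_fiber: "finite {m\<in>PP xs. dg xs m = n}"
proof (rule finite_subset)
  show "{m\<in>PP xs. dg xs m = n} \<subseteq> PiE {..<length xs} (\<lambda>_. {..n})"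
  proof
    fix m assume m: "m \<in> {m\<in>PP xs. dg xs m = n}"
    have "m i \<le> n" if "i < length xs" for i
    proof -
      have "m i \<le> (\<Sum>i<length xs. m i)"
        by (rule member_le_sum) (use that in auto)
      then show ?thesis using m unfolding dg_def by simp
    qed
    then show "m \<in> PiE {..<length xs} (\<lambda>_. {..n})" using m unfolding PP_def by (auto simp: PiE_def)
  qed
  show "finite (PiE {..<length xs} (\<lambda>_. {..n::nat}))" by (rule finite_PiE) auto
qed

lemma Tm_scale:
  "Tm bs (map (\<lambda>x. x * t) xs) m = Tm bs xs m * t ^ dg xs m"
proof -
  have "Tm bs (map (\<lambda>x. x * t) xs) m =
      (\<Prod>i<length xs. (pochhammer (bs!i) (m i) * (xs!i)^(m i) / fact (m i)) * t ^ m i)"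
    unfolding Tm_def by (intro prod.cong refl) (auto simp: power_mult_distrib)
  also have "\<dots> = Tm bs xs m * (\<Prod>i<length xs. t ^ m i)"
    unfolding Tm_def by (rule prod.distrib)
  also have "(\<Prod>i<length xs. t ^ m i) = t ^ dg xs m"
    unfolding dg_def by (simp add: power_sum)
  finally show ?thesis .
qed

lemma dd_series:
  assumes "\<And>i. i < length xs \<Longrightarrow> bs!i > 0 \<and> \<bar>xs!i\<bar> < 1" and "\<bar>t\<bar> \<le> 1"
  shows "(\<lambda>n. dd bs xs n * t ^ n) sums Gf bs (map (\<lambda>x. x * t) xs)"
proof -
  let ?ys = "map (\<lambda>x. x * t) xs"
  have as: "bs!i > 0 \<and> \<bar>?ys!i\<bar> < 1" if "i < length ?ys" for i
  proof -
    have "\<bar>xs!i * t\<bar> = \<bar>xs!i\<bar> * \<bar>t\<bar>" by (simp add: abs_mult)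
    also have "\<dots> \<le> \<bar>xs!i\<bar>" using assms(2) by (simp add: mult_left_le)
    finally show ?thesis using assms(1)[of i] that by auto
  qed
  have hs: "(Tm bs ?ys has_sum Gf bs ?ys) (PP xs)"
    using prod_series(1)[of ?ys bs, OF as] unfolding PP_def by simp
  have "(\<lambda>n. \<Sum>m\<in>{m\<in>PP xs. dg xs m = n}. Tm bs ?ys m) sums infsum (Tm bs ?ys) (PP xs)"
    by (rule group_deg) (use hs fin_fiber in \<open>auto dest: has_sum_imp_summable\<close>)
  moreover have "infsum (Tm bs ?ys) (PP xs) = Gf bs ?ys" using hs by (rule infsumI)
  moreover have "(\<Sum>m\<in>{m\<in>PP xs. dg xs m = n}. Tm bs ?ys m) = dd bs xs n * t ^ n" for n
    unfolding dd_def Tm_scale sum_distrib_right by (rule sum.cong) auto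
  ultimately show ?thesis by simp
qed

lemma dd_abs_summable:
  assumes "\<And>i. i < length xs \<Longrightarrow> bs!i > 0 \<and> \<bar>xs!i\<bar> < 1"
  shows "summable (\<lambda>n. \<bar>dd bs xs n\<bar>)"
proof -
  have S: "(\<lambda>m. norm (Tm bs xs m)) summable_on (PP xs)"
    using prod_series(2)[of xs bs, OF assms] unfolding PP_def by simp
  have "(\<lambda>n. \<Sum>m\<in>{m\<in>PP xs. dg xs m = n}. norm (Tm bs xs m)) sums infsum (\<lambda>m. norm (Tm bs xs m)) (PP xs)"
    by (rule group_deg) (use S fin_fiber in auto)
  hence "summable (\<lambda>n. \<Sum>m\<in>{m\<in>PP xs. dg xs m = n}. norm (Tm bs xs m))"
    by (simp add: sums_iff)
  moreover have "norm \<bar>dd bs xs n\<bar> \<le> (\<Sum>m\<in>{m\<in>PP xs. dg xs m = n}. norm (Tm bs xs m))" for n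
    unfolding dd_def using sum_abs[of "Tm bs xs" "{m\<in>PP xs. dg xs m = n}"] by simp
  ultimately show ?thesis
    by (rule summable_comparison_test'[where N=0])
qed

lemma poch_ratio:
  fixes a :: real
  assumes "a > 0"
  shows "pochhammer a k / pochhammer (a+1) k = a / (a + of_nat k)"
proof -
  have "pochhammer a (Suc k) = a * pochhammer (a+1) k" by (rule pochhammer_rec)
  moreover have "pochhammer a (Suc k) = pochhammer a k * (a + of_nat k)" by (rule pochhammer_Suc)
  moreover have "pochhammer (a+1) k > 0" using assms by (intro pochhammer_pos) auto
  moreover have "a + of_nat k > 0" using assms by simp
  ultimately show ?thesis by (simp add: field_simps)
qed

lemma FD_series:
  fixes a :: real
  assumes "a > 0" "\<And>i. i < length xs \<Longrightarrow> bs!i > 0 \<and> \<bar>xs!i\<bar> < 1"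
  shows "(\<lambda>n. a / (a + of_nat n) * dd bs xs n) sums lauricella_FD a bs (a+1) xs"
proof -
  define g where "g = (\<lambda>m. a / (a + of_nat (dg xs m)) * Tm bs xs m)"
  have FD: "lauricella_FD a bs (a+1) xs = infsum g (PP xs)"
    unfolding lauricella_FD_def g_def PP_def
    by (rule infsum_cong) (simp add: poch_ratio[OF assms(1)] dg_def Tm_def)
  have S: "(\<lambda>m. norm (Tm bs xs m)) summable_on (PP xs)"
    using prod_series(2)[of xs bs, OF assms(2)] unfolding PP_def by simp
  have le: "norm (g m) \<le> norm (Tm bs xs m)" for m
  proof -
    have "\<bar>a / (a + of_nat (dg xs m))\<bar> \<le> 1" using assms(1) by simp
    moreover have "norm (g m) = \<bar>a / (a + of_nat (dg xs m))\<bar> * \<bar>Tm bs xs m\<bar>"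
      unfolding g_def by (simp only: real_norm_def abs_mult)
    ultimately show ?thesis by (metis abs_ge_zero mult_left_le_one_le real_norm_def)
  qed
  have "(\<lambda>m. norm (g m)) summable_on (PP xs)"
    by (rule summable_on_comparison_test[OF S]) (use le in auto)
  hence Sg: "g summable_on (PP xs)" using summable_on_iff_abs_summable_on_real by blast
  have "(\<lambda>n. \<Sum>m\<in>{m\<in>PP xs. dg xs m = n}. g m) sums infsum g (PP xs)"
    by (rule group_deg) (use Sg fin_fiber in auto)
  moreover have "(\<Sum>m\<in>{m\<in>PP xs. dg xs m = n}. g m) = a / (a + of_nat n) * dd bs xs n" for n
    unfolding dd_def g_def sum_distrib_left by (rule sum.cong) auto
  ultimately show ?thesis using FD by simp
qed

lemma powr_split:
  fixes t a :: real
  assumes "t \<ge> 0"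
  shows "t powr (a - 1 + real n) = t powr (a - 1) * t ^ n"
proof (cases "t = 0")
  case True then show ?thesis by simp
next
  case False
  then have "t > 0" using assms by simp
  then show ?thesis by (simp add: powr_add powr_realpow)
qed

lemma FD_integral:
  fixes a :: real
  assumes "a > 0" "\<And>i. i < length xs \<Longrightarrow> bs!i > 0 \<and> \<bar>xs!i\<bar> < 1"
  shows "((\<lambda>t. t powr (a-1) * Gf bs (map (\<lambda>x. x*t) xs)) has_integral
           (lauricella_FD a bs (a+1) xs / a)) {0..1}"
proof -
  define d where "d = dd bs xs"
  define f where "f = (\<lambda>k t. \<Sum>n<k. d n * t powr (a - 1 + real n))"
  define h where "h = (\<lambda>t. (\<Sum>n. \<bar>d n\<bar>) * t powr (a-1))"
  define g where "g = (\<lambda>t. t powr (a-1) * Gf bs (map (\<lambda>x. x*t) xs))"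
  have sd: "summable (\<lambda>n. \<bar>d n\<bar>)" using dd_abs_summable[OF assms(2)] d_def by simp
  have int_n: "((\<lambda>t. d n * t powr (a - 1 + real n)) has_integral (d n / (a + real n))) {0..1}" for n
  proof -
    have "((\<lambda>t. t powr (a - 1 + real n)) has_integral (1 powr (a - 1 + real n + 1) / (a - 1 + real n + 1))) {0..1}"
      by (rule has_integral_powr_from_0) (use assms(1) in auto)
    from has_integral_mult_right[OF this, of "d n"] show ?thesis by simp
  qed
  have int_f: "(f k has_integral (\<Sum>n<k. d n / (a + real n))) {0..1}" for k
    unfolding f_def by (rule has_integral_sum) (auto intro: int_n)
  have le: "norm (f k t) \<le> h t" if t: "t \<in> {0..1}" for k t
  proof -
    have t0: "t \<ge> 0" "t \<le> 1" using t by auto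
    have "norm (f k t) \<le> (\<Sum>n<k. norm (d n * t powr (a - 1 + real n)))"
      unfolding f_def by (rule norm_sum)
    also have "\<dots> \<le> (\<Sum>n<k. \<bar>d n\<bar> * t powr (a - 1))"
    proof (rule sum_mono)
      fix n assume "n \<in> {..<k}"
      have "norm (d n * t powr (a - 1 + real n)) = \<bar>d n\<bar> * (t powr (a - 1) * t ^ n)"
        using t0 by (simp add: powr_split abs_mult)
      also have "\<dots> \<le> \<bar>d n\<bar> * (t powr (a - 1) * 1)"
        using t0 by (intro mult_left_mono power_le_one) auto
      finally show "norm (d n * t powr (a - 1 + real n)) \<le> \<bar>d n\<bar> * t powr (a - 1)" by simp
    qed
    also have "\<dots> = (\<Sum>n<k. \<bar>d n\<bar>) * t powr (a - 1)" by (simp add: sum_distrib_right)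
    also have "\<dots> \<le> h t" unfolding h_def
      by (intro mult_right_mono sum_le_suminf sd) auto
    finally show ?thesis .
  qed
  have h_int: "h integrable_on {0..1}"
  proof -
    have "(\<lambda>t. t powr (a-1)) integrable_on {0..1}"
      by (rule integrable_on_powr_from_0) (use assms(1) in auto)
    from integrable_on_cmult_left[OF this, of "\<Sum>n. \<bar>d n\<bar>"] show ?thesis
      unfolding h_def by simp
  qed
  have conv: "(\<lambda>k. f k t) \<longlonglongrightarrow> g t" if t: "t \<in> {0..1}" for t
  proof -
    have "(\<lambda>n. d n * t ^ n) sums Gf bs (map (\<lambda>x. x * t) xs)"
      unfolding d_def by (rule dd_series[OF assms(2)]) (use t in auto)
    hence "(\<lambda>k. \<Sum>n<k. d n * t ^ n) \<longlonglongrightarrow> Gf bs (map (\<lambda>x. x * t) xs)"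
      by (simp add: sums_def)
    hence "(\<lambda>k. t powr (a-1) * (\<Sum>n<k. d n * t ^ n)) \<longlonglongrightarrow> g t"
      unfolding g_def by (rule tendsto_mult_left)
    moreover have "t powr (a-1) * (\<Sum>n<k. d n * t ^ n) = f k t" for k
      unfolding f_def sum_distrib_left using t by (intro sum.cong refl) (simp add: powr_split)
    ultimately show ?thesis by simp
  qed
  have f_int: "f k integrable_on {0..1}" for k using int_f by blast
  note DC = dominated_convergence[OF f_int h_int le conv]
  have L1: "(\<lambda>k. \<Sum>n<k. d n / (a + real n)) \<longlonglongrightarrow> integral {0..1} g"
  proof -
    have "integral {0..1} (f k) = (\<Sum>n<k. d n / (a + real n))" for k
      using int_f by (rule integral_unique)
    then show ?thesis using DC(2) by simp
  qed
  have "(\<lambda>n. a / (a + of_nat n) * d n / a) sums (lauricella_FD a bs (a+1) xs / a)"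
    unfolding d_def by (rule sums_divide[OF FD_series[OF assms]])
  moreover have "a / (a + of_nat n) * d n / a = d n / (a + real n)" for n
    using assms(1) by simp
  ultimately have "(\<lambda>n. d n / (a + real n)) sums (lauricella_FD a bs (a+1) xs / a)" by simp
  hence L2: "(\<lambda>k. \<Sum>n<k. d n / (a + real n)) \<longlonglongrightarrow> lauricella_FD a bs (a+1) xs / a"
    by (simp add: sums_def)
  have "integral {0..1} g = lauricella_FD a bs (a+1) xs / a"
    using LIMSEQ_unique[OF L1 L2] .
  with DC(1) show ?thesis unfolding g_def using integrable_integral by metis
qed

lemma alg_id:
  fixes N M p q r s sa sb su sac sbc S :: real
  assumes "sa > 0" "sb > 0" "su > 0" "sac > 0" "sbc > 0" "S > 0" "p > 0" "q > 0" "r > 0" "s > 0"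
  shows "N / (p * q) * (M / (sa * sb * su)) =
    S / (r * s * (sac * sbc)) / (S * S) *
    (N * M * (S / su * (r / p * (s / q) * (sac / sa) * (sbc / sb))))"
  using assms by (simp add: field_simps)

lemma pointwise:
  fixes a b c y \<alpha> u :: real
  assumes "0 < c" "c < u" "u \<le> y" "y < 1" "y < b" "b < a"
  defines "t \<equiv> (u - c) / (y - c)"
  defines "GG \<equiv> (1 - (y - c) / (1 - c) * t) powr (-1) * (1 - (- (y - c) / (1 + c)) * t) powr (-1)
      * (1 - (- (y - c) / (c - a)) * t) powr (-(1/2)) * (1 - (- (y - c) / (c - b)) * t) powr (-(1/2))"
  shows "(1 - \<alpha> * u) / (1 - u^2) * (u / sqrt ((a - u) * (b - u) * (u - c))) =
    sqrt (y - c) / ((1 - c^2) * sqrt ((a - c) * (b - c))) / (y - c) *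
    (c * (1 - c * \<alpha>) * (t powr (-1/2) * GG) + (1 - 2 * c * \<alpha>) * (y - c) * (t powr (1/2) * GG)
     + (- (\<alpha> * (y - c)^2)) * (t powr (3/2) * GG))"
proof -
  have yc: "y - c > 0" using assms(1-6) by simp
  have t0: "t > 0" unfolding t_def using assms(1-6) by simp
  have tu: "t * (y - c) = u - c" unfolding t_def using yc by simp
  have tq: "(y - c) / q * t = (u - c) / q" for q
    by (metis tu mult.commute times_divide_eq_left)
  have tq': "(- (y - c)) / q * t = - ((u - c) / q)" for q
    using tq[of q] by (metis minus_divide_left mult_minus_left)
  have e1: "1 - (y - c) / (1 - c) * t = (1 - u) / (1 - c)"
    unfolding tq using assms(1-6) by (simp add: field_simps)
  have e2: "1 - (- (y - c) / (1 + c)) * t = (1 + u) / (1 + c)"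
    unfolding tq' using assms(1-6) by (simp add: field_simps)
  have e3: "1 - (- (y - c) / (c - a)) * t = (a - u) / (a - c)"
    unfolding tq' using assms(1-6) by (simp add: field_simps)
  have e4: "1 - (- (y - c) / (c - b)) * t = (b - u) / (b - c)"
    unfolding tq' using assms(1-6) by (simp add: field_simps)
  have pm1: "q powr (-1) = 1 / q" if "q > 0" for q :: real
    using that by (simp add: powr_minus divide_inverse)
  have pmh: "q powr (-(1/2)) = 1 / sqrt q" if "q > 0" for q :: real
    using that by (simp only: powr_minus powr_half_sqrt[OF less_imp_le[OF that]] inverse_eq_divide)
  have p1: "(1 - u) / (1 - c) > 0" "(1 + u) / (1 + c) > 0" "(a - u) / (a - c) > 0" "(b - u) / (b - c) > 0"
    using assms(1-6) by auto
  have GGe: "GG = (1 - c) / (1 - u) * ((1 + c) / (1 + u)) * (sqrt (a - c) / sqrt (a - u)) * (sqrt (b - c) / sqrt (b - u))"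
    unfolding GG_def e1 e2 e3 e4 pm1[OF p1(1)] pm1[OF p1(2)] pmh[OF p1(3)] pmh[OF p1(4)] real_sqrt_divide
    by simp
  have th: "t powr (-1/2) = sqrt (y - c) / sqrt (u - c)"
  proof -
    have "t powr (-1/2) = 1 / sqrt t" using pmh[OF t0] by simp
    then show ?thesis unfolding t_def using yc assms(1-6) by (simp add: real_sqrt_divide)
  qed
  have t1: "t powr (1/2) = t * t powr (-1/2)"
  proof -
    have "t powr (1/2) = t powr (1 + (-1/2))" by simp
    also have "\<dots> = t * t powr (-1/2)" unfolding powr_add using t0 by simp
    finally show ?thesis .
  qed
  have t3: "t powr (3/2) = t^2 * t powr (-1/2)"
  proof -
    have "t powr (3/2) = t powr (2 + (-1/2))" by simp
    also have "\<dots> = t^2 * t powr (-1/2)" unfolding powr_add using t0 by (simp add: powr_numeral)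
    finally show ?thesis .
  qed
  have poly: "c * (1 - c * \<alpha>) + (1 - 2 * c * \<alpha>) * (y - c) * t + (- (\<alpha> * (y - c)^2)) * t^2
      = (1 - \<alpha> * u) * u"
  proof -
    have u: "u = c + t * (y - c)" using tu by simp
    show ?thesis unfolding u by (simp add: algebra_simps power2_eq_square)
  qed
  have "c * (1 - c * \<alpha>) * (t powr (-1/2) * GG) + (1 - 2 * c * \<alpha>) * (y - c) * (t powr (1/2) * GG)
     + (- (\<alpha> * (y - c)^2)) * (t powr (3/2) * GG)
     = (c * (1 - c * \<alpha>) + (1 - 2 * c * \<alpha>) * (y - c) * t + (- (\<alpha> * (y - c)^2)) * t^2) * (t powr (-1/2) * GG)"
    unfolding t1 t3 by (simp add: algebra_simps)
  also have "\<dots> = (1 - \<alpha> * u) * u * (sqrt (y - c) / sqrt (u - c) * GG)" unfolding poly th ..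
  finally have R: "c * (1 - c * \<alpha>) * (t powr (-1/2) * GG) + (1 - 2 * c * \<alpha>) * (y - c) * (t powr (1/2) * GG)
     + (- (\<alpha> * (y - c)^2)) * (t powr (3/2) * GG) = (1 - \<alpha> * u) * u * (sqrt (y - c) / sqrt (u - c) * GG)" .
  have s1: "sqrt ((a - u) * (b - u) * (u - c)) = sqrt (a - u) * sqrt (b - u) * sqrt (u - c)"
    by (simp add: real_sqrt_mult)
  have s2: "sqrt ((a - c) * (b - c)) = sqrt (a - c) * sqrt (b - c)"
    by (simp add: real_sqrt_mult)
  have s3: "sqrt (y - c) * sqrt (y - c) = y - c" using yc by simp
  have pos: "sqrt (a - u) > 0" "sqrt (b - u) > 0" "sqrt (u - c) > 0" "sqrt (a - c) > 0" "sqrt (b - c) > 0"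
     "sqrt (y - c) > 0" "1 - u > 0" "1 + u > 0" "1 - c > 0" "1 + c > 0"
    using assms(1-6) by auto
  have sq: "1 - u^2 = (1 - u) * (1 + u)" "1 - c^2 = (1 - c) * (1 + c)" by (simp_all add: algebra_simps power2_eq_square)
  have A: "(1 - \<alpha> * u) / ((1 - u) * (1 + u)) * (u / (sqrt (a - u) * sqrt (b - u) * sqrt (u - c))) =
    sqrt (y - c) / ((1 - c) * (1 + c) * (sqrt (a - c) * sqrt (b - c))) / (sqrt (y - c) * sqrt (y - c)) *
    ((1 - \<alpha> * u) * u * (sqrt (y - c) / sqrt (u - c) * ((1 - c) / (1 - u) * ((1 + c) / (1 + u))
       * (sqrt (a - c) / sqrt (a - u)) * (sqrt (b - c) / sqrt (b - u)))))"
    by (rule alg_id) (use pos in auto)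
  show ?thesis unfolding R unfolding GGe s1 s2 sq using A unfolding s3 .
qed

theorem mainTheorem2:
  fixes a b c y \<alpha> :: real
  assumes "0 < c" "c < y" "y < 1" "y < b" "b < a"
  defines "xs \<equiv> [(y - c) / (1 - c), - (y - c) / (1 + c), - (y - c) / (c - a), - (y - c) / (c - b)]"
  defines "X \<equiv> lauricella_FD (1/2) [1, 1, 1/2, 1/2] (3/2) xs"
  defines "Y \<equiv> lauricella_FD (3/2) [1, 1, 1/2, 1/2] (5/2) xs"
  defines "Z \<equiv> lauricella_FD (5/2) [1, 1, 1/2, 1/2] (7/2) xs"
  shows "((\<lambda>u. (1 - \<alpha> * u) / (1 - u^2) * (u / sqrt ((a - u) * (b - u) * (u - c))))
          has_integral
          (sqrt (y - c) / ((1 - c^2) * sqrt ((a - c) * (b - c)))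
            * (2 * c * (1 - c * \<alpha>) * X + 2/3 * (1 - 2 * c * \<alpha>) * (y - c) * Y
               - 2/5 * \<alpha> * (y - c)^2 * Z))) {c..y}"
proof -
  define bs :: "real list" where "bs = [1, 1, 1/2, 1/2]"
  have cond: "bs!i > 0 \<and> \<bar>xs!i\<bar> < 1" if "i < length xs" for i
  proof -
    have "i = 0 \<or> i = 1 \<or> i = 2 \<or> i = 3" using that unfolding xs_def by auto
    moreover have "\<bar>(y - c) / (1 - c)\<bar> < 1" using assms by simp
    moreover have "\<bar>- (y - c) / (1 + c)\<bar> < 1" using assms by simp
    moreover have "\<bar>- (y - c) / (c - a)\<bar> < 1" using assms by (simp add: abs_div_pos divide_less_eq)
    moreover have "\<bar>- (y - c) / (c - b)\<bar> < 1" using assms by (simp add: abs_div_pos divide_less_eq)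
    ultimately show ?thesis unfolding bs_def xs_def by auto
  qed
  define G where "G = (\<lambda>t. Gf bs (map (\<lambda>x. x*t) xs))"
  have I0: "((\<lambda>t. t powr (-1/2) * G t) has_integral (2 * X)) {0..1}"
    using FD_integral[of "1/2" xs bs, OF _ cond] unfolding X_def bs_def G_def by (simp add: mult.commute)
  have I1: "((\<lambda>t. t powr (1/2) * G t) has_integral (Y / (3/2))) {0..1}"
    using FD_integral[of "3/2" xs bs, OF _ cond] unfolding Y_def bs_def G_def by simp
  have I2: "((\<lambda>t. t powr (3/2) * G t) has_integral (Z / (5/2))) {0..1}"
    using FD_integral[of "5/2" xs bs, OF _ cond] unfolding Z_def bs_def G_def by simp
  have Gexp: "G t = (1 - xs!0 * t) powr (-1) * (1 - xs!1 * t) powr (-1) * (1 - xs!2 * t) powr (-(1/2)) * (1 - xs!3 * t) powr (-(1/2))" for t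
    unfolding G_def Gf_def bs_def xs_def by (simp add: eval_nat_numeral)
  define K where "K = sqrt (y - c) / ((1 - c^2) * sqrt ((a - c) * (b - c)))"
  define A0 where "A0 = c * (1 - c * \<alpha>)"
  define A1 where "A1 = (1 - 2 * c * \<alpha>) * (y - c)"
  define A2 where "A2 = - (\<alpha> * (y - c)^2)"
  define H where "H = (\<lambda>t. K / (y - c) * (A0 * (t powr (-1/2) * G t) + A1 * (t powr (1/2) * G t)
      + A2 * (t powr (3/2) * G t)))"
  define I where "I = K / (y - c) * (A0 * (2 * X) + A1 * (Y / (3/2)) + A2 * (Z / (5/2)))"
  have yc: "y - c > 0" using assms by simp
  have J: "(H has_integral I) (cbox 0 1)"
    unfolding H_def I_def cbox_interval
    by (intro has_integral_mult_right has_integral_add I0 I1 I2)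
  have J2: "((\<lambda>x. H ((1 / (y - c)) *\<^sub>R x + (- c / (y - c)))) has_integral (I /\<^sub>R (1 / (y - c)) ^ DIM(real)))
     (cbox ((0 - (- c / (y - c))) /\<^sub>R (1 / (y - c))) ((1 - (- c / (y - c))) /\<^sub>R (1 / (y - c))))"
    by (rule has_integral_affinity'[OF J]) (use yc in simp)
  have box: "cbox ((0 - (- c / (y - c))) /\<^sub>R (1 / (y - c))) ((1 - (- c / (y - c))) /\<^sub>R (1 / (y - c))) = {c..y}"
    unfolding cbox_interval using yc by (simp add: field_simps)
  have val: "I /\<^sub>R (1 / (y - c)) ^ DIM(real) =
     sqrt (y - c) / ((1 - c^2) * sqrt ((a - c) * (b - c)))
            * (2 * c * (1 - c * \<alpha>) * X + 2/3 * (1 - 2 * c * \<alpha>) * (y - c) * Y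
               - 2/5 * \<alpha> * (y - c)^2 * Z)"
  proof -
    have E: "A0 * (2 * X) + A1 * (Y / (3/2)) + A2 * (Z / (5/2)) =
      2 * c * (1 - c * \<alpha>) * X + 2/3 * (1 - 2 * c * \<alpha>) * (y - c) * Y - 2/5 * \<alpha> * (y - c)^2 * Z"
      unfolding A0_def A1_def A2_def by (simp add: field_simps power2_eq_square)
    have "I /\<^sub>R (1 / (y - c)) ^ DIM(real) = (y - c) * I" by simp
    also have "\<dots> = K * (A0 * (2 * X) + A1 * (Y / (3/2)) + A2 * (Z / (5/2)))"
      unfolding I_def using yc by simp
    finally show ?thesis unfolding E K_def .
  qed
  have J3: "((\<lambda>x. H ((1 / (y - c)) *\<^sub>R x + (- c / (y - c)))) has_integral
     (sqrt (y - c) / ((1 - c^2) * sqrt ((a - c) * (b - c)))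
            * (2 * c * (1 - c * \<alpha>) * X + 2/3 * (1 - 2 * c * \<alpha>) * (y - c) * Y
               - 2/5 * \<alpha> * (y - c)^2 * Z))) {c..y}"
    using J2 unfolding box val .
  show ?thesis
  proof (rule has_integral_spike_finite[OF _ _ J3])
    show "finite {c}" by simp
    fix u assume u: "u \<in> {c..y} - {c}"
    have uc: "c < u" "u \<le> y" using u by auto
    have targ: "(1 / (y - c)) *\<^sub>R u + (- c / (y - c)) = (u - c) / (y - c)"
      by (simp add: diff_divide_distrib)
    show "(1 - \<alpha> * u) / (1 - u^2) * (u / sqrt ((a - u) * (b - u) * (u - c))) =
      H ((1 / (y - c)) *\<^sub>R u + (- c / (y - c)))"
      unfolding targ H_def Gexp K_def A0_def A1_def A2_def
      using pointwise[of c u y b a \<alpha>] assms uc unfolding xs_def by simp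
  qed
qed

end
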